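(* Let $\{\alpha_{i,j,k}\}_{1\le i,j,k\le d}$ be real numbers invariant under all permutations of the three indices, let $A_k:=(\alpha_{k,r,s})_{1\le r,s\le d}$ for $k=1,\dots,d$, and fix $i,j\in\{1,\dots,d\}$ with $C_{i,j}:=A_iA_j-A_jA_i$. Then the following are equivalent: (a) $(C_{i,j}\mathbf t)\cdot\big((I-t_1A_1-\cdots-t_dA_d)^{-1}\mathbf t\big)=0$ for all $\mathbf t$ in a neighborhood of $\mathbf 0\in\mathbb R^d$; (b) $(C_{i,j}\mathbf t)\cdot\big((t_1A_1+\cdots+t_dA_d)^n\mathbf t\big)=0$ for all $n\in\mathbb N$ and all $\mathbf t\in\mathbb R^d$; (c) $(C_{i,j}\mathbf t)\cdot\big((t_1A_1+\cdots+t_dA_d)^n\mathbf t\big)=0$ for all $1\le n\le d-1$ and all $\mathbf t\in\mathbb R^d$.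
   Context: $I$ denotes the $d\times d$ identity matrix and $\cdot$ the standard inner product on $\mathbb R^d$. *)

theory Defs
  imports "HOL-Analysis.Analysis"
begin

text \<open>Matrix power (the library power on vec is componentwise, so we define it).\<close>
primrec matpow :: "real^'n^'n \<Rightarrow> nat \<Rightarrow> real^'n^'n" where
  "matpow M 0 = mat 1"
| "matpow M (Suc k) = M ** matpow M k"

definition Amat :: "('n \<Rightarrow> 'n \<Rightarrow> 'n \<Rightarrow> real) \<Rightarrow> 'n \<Rightarrow> real^'n^'n" where
  "Amat \<alpha> k = (\<chi> r s. \<alpha> k r s)"

definition Tmat :: "('n \<Rightarrow> 'n \<Rightarrow> 'n \<Rightarrow> real) \<Rightarrow> real^'n \<Rightarrow> real^'n^'n" where
  "Tmat \<alpha> t = (\<Sum>k\<in>UNIV. t $ k *\<^sub>R Amat \<alpha> k)"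

end

theory Submission imports Defs "HOL-Complex_Analysis.Cauchy_Integral_Formula" begin

lemma mat_bound:
  fixes A :: "real^'n^'n"
  shows "norm (A *v x) \<le> (\<Sum>i\<in>UNIV. \<Sum>j\<in>UNIV. \<bar>A $ i $ j\<bar>) * norm x"
proof -
  have "norm (A *v x) \<le> onorm ((*v) A) * norm x"
    by (rule onorm) (metis matrix_vector_mul_linear linear_conv_bounded_linear)
  also have "\<dots> \<le> (\<Sum>i\<in>UNIV. \<Sum>j\<in>UNIV. \<bar>A $ i $ j\<bar>) * norm x"
    by (rule mult_right_mono[OF onorm_le_matrix_component_sum]) simp
  finally show ?thesis .
qed

lemma matpow_bound:
  fixes M :: "real^'n^'n"
  assumes "0 \<le> q" "\<And>x. norm (M *v x) \<le> q * norm x"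
  shows "norm (matpow M m *v x) \<le> q ^ m * norm x"
proof (induction m)
  case 0 then show ?case by simp
next
  case (Suc m)
  have "norm (matpow M (Suc m) *v x) = norm (M *v (matpow M m *v x))"
    by (simp add: matrix_vector_mul_assoc)
  also have "\<dots> \<le> q * norm (matpow M m *v x)" by (rule assms(2))
  also have "\<dots> \<le> q * (q ^ m * norm x)" using Suc.IH assms(1) by (simp add: mult_left_mono)
  finally show ?case by (simp add: mult.assoc)
qed

lemma matpow_scale:
  fixes M :: "real^'n^'n"
  shows "matpow (s *\<^sub>R M) m *v x = s ^ m *\<^sub>R (matpow M m *v x)"
proof (induction m)
  case 0 then show ?case by simp
next
  case (Suc m)
  have "matpow (s *\<^sub>R M) (Suc m) *v x = (s *\<^sub>R M) *v (matpow (s *\<^sub>R M) m *v x)"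
    by (simp add: matrix_vector_mul_assoc)
  also have "\<dots> = s ^ Suc m *\<^sub>R (M *v (matpow M m *v x))"
    by (simp add: Suc scaleR_matrix_vector_assoc[symmetric] matrix_vector_mult_scaleR)
  also have "\<dots> = s ^ Suc m *\<^sub>R (matpow M (Suc m) *v x)"
    by (simp add: matrix_vector_mul_assoc)
  finally show ?case .
qed

lemma neumann:
  fixes M :: "real^'n^'n"
  assumes q: "0 \<le> q" "q < 1" and bd: "\<And>x. norm (M *v x) \<le> q * norm x"
  shows "(\<lambda>m. y \<bullet> (matpow M m *v t)) sums (y \<bullet> (matrix_inv (mat 1 - M) *v t))"
proof -
  have ker: "\<forall>x. (mat 1 - M) *v x = 0 \<longrightarrow> x = 0"
  proof (intro allI impI)
    fix x assume "(mat 1 - M) *v x = 0"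
    then have "x = M *v x" by (simp add: matrix_vector_mult_diff_rdistrib)
    then have "norm x \<le> q * norm x" using bd by metis
    then show "x = 0" using q mult_strict_right_mono[of q 1 "norm x"]
      by (cases "norm x = 0") auto
  qed
  then have "invertible (mat 1 - M)"
    using matrix_left_invertible_ker invertible_left_inverse by blast
  then have "\<exists>A'. (mat 1 - M) ** A' = mat 1 \<and> A' ** (mat 1 - M) = mat 1"
    unfolding invertible_def by blast
  then have N: "matrix_inv (mat 1 - M) ** (mat 1 - M) = mat 1"
    unfolding matrix_inv_def by (rule someI2_ex) blast
  define N where "N = matrix_inv (mat 1 - M)"
  define S where "S k = (\<Sum>m<k. matpow M m *v t)" for k
  have tel: "(mat 1 - M) *v S k = t - matpow M k *v t" for k
  proof (induction k)
    case 0 then show ?case by (simp add: S_def)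
  next
    case (Suc k)
    have "(mat 1 - M) *v S (Suc k) = (mat 1 - M) *v S k + (mat 1 - M) *v (matpow M k *v t)"
      by (simp add: S_def matrix_vector_right_distrib)
    also have "(mat 1 - M) *v (matpow M k *v t) = matpow M k *v t - matpow M (Suc k) *v t"
      by (simp add: matrix_vector_mult_diff_rdistrib flip: matrix_vector_mul_assoc)
    also have "(mat 1 - M) *v S k + (matpow M k *v t - matpow M (Suc k) *v t) = t - matpow M (Suc k) *v t"
      using Suc by simp
    finally show ?case .
  qed
  have SN: "S k = N *v (t - matpow M k *v t)" for k
    by (metis tel N N_def matrix_vector_mul_assoc matrix_vector_mul_lid)
  have "(\<lambda>k. matpow M k *v t) \<longlonglongrightarrow> 0"
  proof (rule tendsto_norm_zero_cancel, rule Lim_null_comparison)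
    show "\<forall>\<^sub>F k in sequentially. norm (norm (matpow M k *v t)) \<le> q ^ k * norm t"
      using matpow_bound[OF q(1) bd] by simp
    show "(\<lambda>k. q ^ k * norm t) \<longlonglongrightarrow> 0"
      using q by (intro tendsto_mult_left_zero LIMSEQ_power_zero) auto
  qed
  then have "(\<lambda>k. N *v (t - matpow M k *v t)) \<longlonglongrightarrow> N *v (t - 0)"
    by (intro bounded_linear.tendsto[of "(*v) N"] tendsto_intros) (metis matrix_vector_mul_linear linear_conv_bounded_linear)
  then have "S \<longlonglongrightarrow> N *v t" using SN[abs_def] by simp
  then have "(\<lambda>k. y \<bullet> S k) \<longlonglongrightarrow> y \<bullet> (N *v t)"
    by (intro tendsto_intros)
  then show ?thesis
    unfolding sums_def S_def N_def by (simp add: inner_sum_right)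
qed


lemma krylov:
  fixes T :: "real^'n^'n"
  shows "matpow T n *v t \<in> span ((\<lambda>m. matpow T m *v t) ` {..<CARD('n)})"
proof -
  define v where "v m = matpow T m *v t" for m
  define K where "K k = v ` {..<k}" for k
  have Ksuc: "K (Suc k) = insert (v k) (K k)" for k by (auto simp: K_def lessThan_Suc)
  have K0: "K 0 = {}" by (simp add: K_def)
  have "\<exists>k \<le> CARD('n). v k \<in> span (K k)"
  proof (rule ccontr)
    assume "\<not> ?thesis"
    hence nin: "\<And>k. k \<le> CARD('n) \<Longrightarrow> v k \<notin> span (K k)" by auto
    have "k \<le> Suc CARD('n) \<Longrightarrow> dim (K k) = k" for k
      by (induction k) (auto simp: K0 Ksuc dim_insert nin)
    then have "dim (K (Suc CARD('n))) = Suc CARD('n)" by simp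
    with dim_subset_UNIV_cart[of "K (Suc CARD('n))"] show False by simp
  qed
  then obtain k where k: "k \<le> CARD('n)" "v k \<in> span (K k)" by blast
  have sub: "(\<lambda>x. T *v x) ` K k \<subseteq> span (K k)"
  proof
    fix y assume "y \<in> (\<lambda>x. T *v x) ` K k"
    then obtain m where m: "m < k" "y = T *v v m" by (auto simp: K_def)
    then have y: "y = v (Suc m)" by (simp add: v_def matrix_vector_mul_assoc)
    show "y \<in> span (K k)"
    proof (cases "Suc m = k")
      case True with k y show ?thesis by simp
    next
      case False
      with m have "Suc m \<in> {..<k}" by simp
      then have "v (Suc m) \<in> K k" by (simp add: K_def)
      with y show ?thesis by (simp add: span_base)
    qed
  qed
  have "v n \<in> span (K k)"
  proof (induction n)
    case 0 show ?case
    proof (cases k)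
      case 0 with k show ?thesis by simp
    next
      case (Suc k') then show ?thesis by (intro span_base) (auto simp: K_def)
    qed
  next
    case (Suc n)
    have "v (Suc n) = T *v v n" by (simp add: v_def matrix_vector_mul_assoc)
    also have "\<dots> \<in> (\<lambda>x. T *v x) ` span (K k)" using Suc by blast
    also have "\<dots> = span ((\<lambda>x. T *v x) ` K k)" by (rule span_linear_image[symmetric]) simp
    also have "\<dots> \<subseteq> span (K k)" using sub by (intro span_minimal) auto
    finally show ?case .
  qed
  moreover have "span (K k) \<subseteq> span (K CARD('n))" using k(1) by (intro span_mono) (auto simp: K_def)
  ultimately show ?thesis by (auto simp: v_def K_def)
qed

lemma inner_transpose:
  fixes A :: "real^'n^'n"
  shows "(A *v x) \<bullet> y = x \<bullet> (transpose A *v y)"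
  by (simp add: inner_vec_def matrix_vector_mult_def transpose_def sum_distrib_left sum_distrib_right mult_ac)
     (rule sum.swap)

lemma transpose_diff': "transpose (X - Y) = transpose X - (transpose Y :: real^'n^'n)"
  by (simp add: transpose_def vec_eq_iff)

lemma Tmat_scale: "Tmat \<alpha> (s *\<^sub>R t) = s *\<^sub>R Tmat \<alpha> t"
  by (simp add: Tmat_def scaleR_sum_right)

lemma Tmat_bound:
  "(\<Sum>i\<in>UNIV. \<Sum>j\<in>UNIV. \<bar>Tmat \<alpha> t $ i $ j\<bar>) \<le> norm t * (\<Sum>i\<in>UNIV. \<Sum>j\<in>UNIV. \<Sum>k\<in>UNIV. \<bar>\<alpha> k i j\<bar>)"
proof -
  have "\<bar>Tmat \<alpha> t $ i $ j\<bar> \<le> norm t * (\<Sum>k\<in>UNIV. \<bar>\<alpha> k i j\<bar>)" for i j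
  proof -
    have "\<bar>Tmat \<alpha> t $ i $ j\<bar> = \<bar>\<Sum>k\<in>UNIV. t $ k * \<alpha> k i j\<bar>"
      by (simp add: Tmat_def Amat_def)
    also have "\<dots> \<le> (\<Sum>k\<in>UNIV. \<bar>t $ k\<bar> * \<bar>\<alpha> k i j\<bar>)"
      by (rule order_trans[OF sum_abs]) (simp add: abs_mult)
    also have "\<dots> \<le> (\<Sum>k\<in>UNIV. norm t * \<bar>\<alpha> k i j\<bar>)"
      by (intro sum_mono mult_right_mono) (auto simp: component_le_norm_cart)
    finally show ?thesis by (simp add: sum_distrib_left)
  qed
  then have "(\<Sum>i\<in>UNIV. \<Sum>j\<in>UNIV. \<bar>Tmat \<alpha> t $ i $ j\<bar>) \<le> (\<Sum>i\<in>UNIV. \<Sum>j\<in>UNIV. norm t * (\<Sum>k\<in>UNIV. \<bar>\<alpha> k i j\<bar>))"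
    by (intro sum_mono) auto
  then show ?thesis by (simp add: sum_distrib_left)
qed


theorem mainTheorem8:
  fixes \<alpha> :: "'n::finite \<Rightarrow> 'n \<Rightarrow> 'n \<Rightarrow> real" and i j :: 'n
  assumes sym: "\<And>a b c. \<alpha> a b c = \<alpha> a c b \<and> \<alpha> a b c = \<alpha> b a c \<and> \<alpha> a b c = \<alpha> b c a
                  \<and> \<alpha> a b c = \<alpha> c a b \<and> \<alpha> a b c = \<alpha> c b a"
  defines "C \<equiv> Amat \<alpha> i ** Amat \<alpha> j - Amat \<alpha> j ** Amat \<alpha> i"
  shows "((\<forall>\<^sub>F t in nhds 0. (C *v t) \<bullet> (matrix_inv (mat 1 - Tmat \<alpha> t) *v t) = 0)
          \<longleftrightarrow> (\<forall>n::nat. \<forall>t. (C *v t) \<bullet> (matpow (Tmat \<alpha> t) n *v t) = 0))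
       \<and> ((\<forall>n::nat. \<forall>t. (C *v t) \<bullet> (matpow (Tmat \<alpha> t) n *v t) = 0)
          \<longleftrightarrow> (\<forall>n::nat. 1 \<le> n \<and> n \<le> CARD('n) - 1 \<longrightarrow>
                 (\<forall>t. (C *v t) \<bullet> (matpow (Tmat \<alpha> t) n *v t) = 0)))"
proof -
  define f where "f n t = (C *v t) \<bullet> (matpow (Tmat \<alpha> t) n *v t)" for n t
  have trA: "transpose (Amat \<alpha> k) = Amat \<alpha> k" for k
    by (simp add: transpose_def Amat_def vec_eq_iff) (metis sym)
  have trC: "transpose C = - C"
    by (simp add: C_def transpose_diff' matrix_transpose_mul trA)
  have f0: "f 0 t = 0" for t
  proof -
    have "(C *v t) \<bullet> t = t \<bullet> (transpose C *v t)" by (rule inner_transpose)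
    also have "\<dots> = - ((C *v t) \<bullet> t)"
    proof -
      have "(- C) *v t = - (C *v t)" by (simp add: matrix_vector_mult_def vec_eq_iff sum_negf)
      then show ?thesis by (simp add: trC inner_commute)
    qed
    finally show ?thesis by (simp add: f_def)
  qed
  define LB where "LB = (\<Sum>i\<in>UNIV. \<Sum>j\<in>UNIV. \<Sum>k\<in>UNIV. \<bar>\<alpha> k i j\<bar>)"
  have LB0: "LB \<ge> 0" unfolding LB_def by (intro sum_nonneg) auto
  have part2: "(\<forall>n t. f n t = 0) \<longleftrightarrow> (\<forall>n::nat. 1 \<le> n \<and> n \<le> CARD('n) - 1 \<longrightarrow> (\<forall>t. f n t = 0))"
  proof
    assume h: "\<forall>n::nat. 1 \<le> n \<and> n \<le> CARD('n) - 1 \<longrightarrow> (\<forall>t. f n t = 0)"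
    show "\<forall>n t. f n t = 0"
    proof (intro allI)
      fix n t
      have lin: "linear (\<lambda>x. (C *v t) \<bullet> x)"
        by (simp add: bounded_linear.linear bounded_linear_inner_right)
      show "f n t = 0" unfolding f_def
      proof (rule linear_eq_0_on_span[OF lin _ krylov])
        fix x assume "x \<in> (\<lambda>m. matpow (Tmat \<alpha> t) m *v t) ` {..<CARD('n)}"
        then obtain m where m: "m < CARD('n)" "x = matpow (Tmat \<alpha> t) m *v t" by auto
        show "(C *v t) \<bullet> x = 0"
        proof (cases "m = 0")
          case True with m f0 show ?thesis by (simp add: f_def)
        next
          case False with m h show ?thesis by (simp add: f_def)
        qed
      qed
    qed
  qed auto
  have Tbd: "norm (Tmat \<alpha> t *v x) \<le> norm t * LB * norm x" for t x
    using mat_bound[of "Tmat \<alpha> t" x] Tmat_bound[of \<alpha> t] norm_ge_zero[of x] unfolding LB_def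
    by (meson mult_right_mono order_trans)
  have part1: "(\<forall>\<^sub>F t in nhds 0. (C *v t) \<bullet> (matrix_inv (mat 1 - Tmat \<alpha> t) *v t) = 0)
          \<longleftrightarrow> (\<forall>n t. f n t = 0)"
  proof
    assume ev: "\<forall>\<^sub>F t in nhds 0. (C *v t) \<bullet> (matrix_inv (mat 1 - Tmat \<alpha> t) *v t) = 0"
    then obtain e where e: "e > 0"
      "\<And>u. dist u 0 < e \<Longrightarrow> (C *v u) \<bullet> (matrix_inv (mat 1 - Tmat \<alpha> u) *v u) = 0"
      by (auto simp: eventually_nhds_metric)
    show "\<forall>n t. f n t = 0"
    proof (intro allI)
      fix n t
      show "f n t = 0"
      proof (cases "t = 0")
        case True then show ?thesis by (simp add: f_def)
      next
        case False
        then have nt: "norm t > 0" by simp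
        define T where "T = Tmat \<alpha> t"
        define B where "B = norm t * LB"
        have B0: "B \<ge> 0" using LB0 by (simp add: B_def)
        have TB: "norm (T *v x) \<le> B * norm x" for x using Tbd by (simp add: T_def B_def)
        define r where "r = min (e / norm t) (1 / (2*(B+1)))"
        have r0: "r > 0" using e nt B0 by (simp add: r_def)
        define a where "a m = f m t" for m
        define h where "h s = (C *v t) \<bullet> (matrix_inv (mat 1 - s *\<^sub>R T) *v t)" for s
        have sm: "(\<lambda>m. a m * s^m) sums h s" if "norm s < r" for s :: real
        proof -
          have "\<bar>s\<bar> < 1 / (2*(B+1))" using that by (simp add: r_def)
          then have "\<bar>s\<bar> * (2*(B+1)) < 1" using B0 by (simp add: field_simps)
          then have q: "0 \<le> \<bar>s\<bar> * B" "\<bar>s\<bar> * B < 1" using B0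
            by (auto simp: algebra_simps)
          have bd: "norm ((s *\<^sub>R T) *v x) \<le> (\<bar>s\<bar>*B) * norm x" for x
            using TB[of x] by (simp add: scaleR_matrix_vector_assoc[symmetric] mult_left_mono mult.assoc)
          from neumann[OF q bd, of "C *v t" t]
          show ?thesis unfolding h_def a_def f_def T_def by (simp add: matpow_scale mult.commute)
        qed
        have hz: "h s = 0" if "norm s < r" for s :: real
        proof (cases "s = 0")
          case True
          from sm[of 0] r0 True have "a 0 = h 0" by simp
          then show ?thesis using True f0 by (simp add: a_def)
        next
          case False
          have "\<bar>s\<bar> < e / norm t" using that by (simp add: r_def)
          then have "norm (s *\<^sub>R t) < e" using nt by (simp add: field_simps)
          then have "(C *v (s *\<^sub>R t)) \<bullet> (matrix_inv (mat 1 - Tmat \<alpha> (s *\<^sub>R t)) *v (s *\<^sub>R t)) = 0"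
            using e(2) by (simp add: dist_norm)
          moreover have "(C *v (s *\<^sub>R t)) \<bullet> (matrix_inv (mat 1 - Tmat \<alpha> (s *\<^sub>R t)) *v (s *\<^sub>R t)) = s * s * h s"
            by (simp add: h_def T_def Tmat_scale matrix_vector_mult_scaleR)
          ultimately show ?thesis using False by simp
        qed
        have sm0: "(\<lambda>m. a m * (x - 0)^m) sums (\<lambda>_. 0::real) x" if "norm (x - 0) < r" for x :: real
          using sm[of x] hz[of x] that by simp
        show ?thesis
        proof (cases "n = 0")
          case True then show ?thesis using f0 by simp
        next
          case False
          show ?thesis
          proof (rule ccontr)
            assume "f n t \<noteq> 0"
            then have an: "a n \<noteq> 0" by (simp add: a_def)
            show False
            proof (rule powser_0_nonzero[of r "0::real" a "\<lambda>_::real. 0::real" n, OF r0 sm0 _ an])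
              show "0 < n" using False by simp
              show "(\<lambda>_::real. 0::real) 0 = 0" by simp
              fix s :: real assume s: "0 < s" "\<And>z::real. z \<in> cball 0 s - {0} \<Longrightarrow> (\<lambda>_::real. 0::real) z \<noteq> 0"
              have "s \<in> cball 0 s - {0::real}" using s(1) by auto
              then show False using s(2)[of s] by simp
            qed
          qed
        qed
      qed
    qed
  next
    assume all: "\<forall>n t. f n t = 0"
    show "\<forall>\<^sub>F t in nhds 0. (C *v t) \<bullet> (matrix_inv (mat 1 - Tmat \<alpha> t) *v t) = 0"
      unfolding eventually_nhds_metric
    proof (intro exI[of _ "1/(2*(LB+1))"] conjI allI impI)
      show "1/(2*(LB+1)) > 0" using LB0 by simp
      fix t :: "real^'n" assume "dist t 0 < 1/(2*(LB+1))"
      then have "norm t * (2*(LB+1)) < 1" using LB0 by (simp add: field_simps)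
      moreover have "norm t * LB \<le> norm t * (2*(LB+1))" using LB0 by (intro mult_left_mono) auto
      ultimately have q: "0 \<le> norm t * LB" "norm t * LB < 1" using LB0 by auto
      have bd: "norm (Tmat \<alpha> t *v x) \<le> (norm t * LB) * norm x" for x by (rule Tbd)
      from neumann[OF q bd, of "C *v t" t] all
      have "(\<lambda>m. 0) sums ((C *v t) \<bullet> (matrix_inv (mat 1 - Tmat \<alpha> t) *v t))"
        by (simp add: f_def)
      then show "(C *v t) \<bullet> (matrix_inv (mat 1 - Tmat \<alpha> t) *v t) = 0"
        using sums_unique2 sums_zero by blast
    qed
  qed
  show ?thesis using part1 part2 unfolding f_def by blast
qed

end
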